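(* (1) For any finite alphabet $\Sigma$ and any $\lambda\in[0,1]$, there is a quantum automaton $\mathcal{A}$ over $\Sigma$ such that $f^{\mathrm{D}}_{\mathcal{A}}(w)=\lambda$ for all $w\in\Sigma^\omega$. (2) Let $\mathcal{A}$ and $\mathcal{B}$ be quantum automata over the same alphabet $\Sigma$ and $a,b\in\mathbb{C}$ with $|a|^2+|b|^2=1$. Then for every $w\in\Sigma^\omega$, $f^{\mathrm{D}}_{a\mathcal{A}\oplus b\mathcal{B}}(w)\ge\max\{|a|^2f^{\mathrm{D}}_{\mathcal{A}}(w),|b|^2f^{\mathrm{D}}_{\mathcal{B}}(w)\}$.
   Context: A quantum automaton is a tuple $\mathcal{A}=(\mathcal{H},|s_0\rangle,\Sigma,\{U_\sigma:\sigma\in\Sigma\},F)$ where $\mathcal{H}$ is a finite-dimensional complex Hilbert space, $|s_0\rangle$ a unit vector, $\Sigma$ a finite alphabet, each $U_\sigma$ unitary, and $F$ a subspace. For $w=\sigma_1\sigma_2\cdots\in\Sigma^\omega$, a unit vector $|\psi\rangle\in F$ and checkpoints $0\le n_1<n_2<\cdots$, the disturbing run is $|s_0\rangle$ (initial state) and for $n\ge1$: $|s_n\rangle=U_{\sigma_n}|\psi\rangle$ if $n-1=n_i$ for some $i$, else $|s_n\rangle=U_{\sigma_n}|s_{n-1}\rangle$; $f^{\mathrm{D}}_{\mathcal{A}}(w)=\sup_{|\psi\rangle}\sup_{\{n_i\}}\inf_{i\ge1}|\langle\psi|s_{n_i}\rangle|^2$ over unit $|\psi\rangle\in F$ and strictly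 increasing checkpoint sequences. The weighted direct sum of $\mathcal{A}=(\mathcal{H}^{\mathcal{A}},|s_0^{\mathcal{A}}\rangle,\Sigma,\{U^{\mathcal{A}}_\sigma\},F^{\mathcal{A}})$ and $\mathcal{B}=(\mathcal{H}^{\mathcal{B}},|s_0^{\mathcal{B}}\rangle,\Sigma,\{U^{\mathcal{B}}_\sigma\},F^{\mathcal{B}})$ is $a\mathcal{A}\oplus b\mathcal{B}=(\mathcal{H}^{\mathcal{A}}\oplus\mathcal{H}^{\mathcal{B}},a|s_0^{\mathcal{A}}\rangle\oplus b|s_0^{\mathcal{B}}\rangle,\Sigma,\{U^{\mathcal{A}}_\sigma\oplus U^{\mathcal{B}}_\sigma\},F^{\mathcal{A}}\oplus F^{\mathcal{B}})$. *)

theory Defs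
  imports "HOL-Analysis.Analysis" "Jordan_Normal_Form.Matrix"
begin

definition cinner :: "complex vec \<Rightarrow> complex vec \<Rightarrow> complex" where
  "cinner v w = (\<Sum>i<dim_vec v. cnj (v $ i) * w $ i)"

definition unit_vec_c :: "nat \<Rightarrow> complex vec \<Rightarrow> bool" where
  "unit_vec_c n v \<longleftrightarrow> v \<in> carrier_vec n \<and> (\<Sum>i<n. (cmod (v $ i))\<^sup>2) = 1"

definition adjoint_mat :: "complex mat \<Rightarrow> complex mat" where
  "adjoint_mat U = mat (dim_col U) (dim_row U) (\<lambda>(i,j). cnj (U $$ (j,i)))"

definition unitary_mat :: "nat \<Rightarrow> complex mat \<Rightarrow> bool" where
  "unitary_mat n U \<longleftrightarrow> U \<in> carrier_mat n n \<and> adjoint_mat U * U = 1\<^sub>m n \<and> U * adjoint_mat U = 1\<^sub>m n"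

definition csubspace_vec :: "nat \<Rightarrow> complex vec set \<Rightarrow> bool" where
  "csubspace_vec n F \<longleftrightarrow> F \<subseteq> carrier_vec n \<and> 0\<^sub>v n \<in> F \<and>
     (\<forall>u\<in>F. \<forall>v\<in>F. u + v \<in> F) \<and> (\<forall>c. \<forall>u\<in>F. c \<cdot>\<^sub>v u \<in> F)"

record 'a qaut =
  qa_dim :: nat
  qa_init :: "complex vec"
  qa_alph :: "'a set"
  qa_U :: "'a \<Rightarrow> complex mat"
  qa_F :: "complex vec set"

definition is_qaut :: "'a qaut \<Rightarrow> bool" where
  "is_qaut A \<longleftrightarrow> finite (qa_alph A) \<and> unit_vec_c (qa_dim A) (qa_init A) \<and>
     (\<forall>\<sigma>\<in>qa_alph A. unitary_mat (qa_dim A) (qa_U A \<sigma>)) \<and>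
     csubspace_vec (qa_dim A) (qa_F A)"

text \<open>Infinite words are sequences w :: nat => 'a, with w 0 = sigma_1.
  Disturbing run: drun A w psi ns n is |s_n>, checkpoints n_1 < n_2 < ... are ns 0 < ns 1 < ...\<close>

fun drun :: "'a qaut \<Rightarrow> (nat \<Rightarrow> 'a) \<Rightarrow> complex vec \<Rightarrow> (nat \<Rightarrow> nat) \<Rightarrow> nat \<Rightarrow> complex vec" where
  "drun A w \<psi> ns 0 = qa_init A"
| "drun A w \<psi> ns (Suc n) =
     qa_U A (w n) *\<^sub>v (if n \<in> range ns then \<psi> else drun A w \<psi> ns n)"

text \<open>Supremum over unit psi in F and strictly increasing checkpoints of the infimum of
  the overlaps; the empty supremum (F = {0}) is taken to be 0.\<close>

definition fD :: "'a qaut \<Rightarrow> (nat \<Rightarrow> 'a) \<Rightarrow> real" where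
  "fD A w = Sup (insert 0 {(INF i. (cmod (cinner \<psi> (drun A w \<psi> ns (ns i))))\<^sup>2) | \<psi> ns.
      \<psi> \<in> qa_F A \<and> unit_vec_c (qa_dim A) \<psi> \<and> strict_mono ns})"

definition wdsum :: "complex \<Rightarrow> 'a qaut \<Rightarrow> complex \<Rightarrow> 'a qaut \<Rightarrow> 'a qaut" where
  "wdsum a A b B = \<lparr> qa_dim = qa_dim A + qa_dim B,
     qa_init = (a \<cdot>\<^sub>v qa_init A) @\<^sub>v (b \<cdot>\<^sub>v qa_init B),
     qa_alph = qa_alph A,
     qa_U = (\<lambda>\<sigma>. four_block_mat (qa_U A \<sigma>) (0\<^sub>m (qa_dim A) (qa_dim B))
                                (0\<^sub>m (qa_dim B) (qa_dim A)) (qa_U B \<sigma>)),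
     qa_F = {u @\<^sub>v v | u v. u \<in> qa_F A \<and> v \<in> qa_F B} \<rparr>"

end

theory Submission imports Defs begin

definition nsq :: "complex vec \<Rightarrow> real" where
  "nsq v = (\<Sum>i<dim_vec v. (cmod (v $ i))\<^sup>2)"

lemma cinner_self: "cinner v v = of_real (nsq v)"
  unfolding cinner_def nsq_def
  by (simp add: complex_norm_square[symmetric] of_real_sum of_real_power mult.commute)

lemma cinner_CS:
  assumes "dim_vec x = dim_vec y"
  shows "(cmod (cinner x y))\<^sup>2 \<le> nsq x * nsq y"
proof -
  have "cmod (cinner x y) \<le> (\<Sum>i<dim_vec x. cmod (x$i) * cmod (y$i))"
    unfolding cinner_def by (rule order_trans[OF norm_sum]) (simp add: norm_mult)
  hence "(cmod (cinner x y))\<^sup>2 \<le> (\<Sum>i<dim_vec x. cmod (x$i) * cmod (y$i))\<^sup>2"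
    by (simp add: power_mono)
  also have "\<dots> \<le> nsq x * nsq y"
    unfolding nsq_def using assms by (simp add: Cauchy_Schwarz_ineq_sum)
  finally show ?thesis .
qed

lemma cinner_adj:
  assumes "U \<in> carrier_mat n m" "x \<in> carrier_vec m" "y \<in> carrier_vec n"
  shows "cinner (U *\<^sub>v x) y = cinner x (adjoint_mat U *\<^sub>v y)"
proof -
  have "cinner (U *\<^sub>v x) y = (\<Sum>i<n. \<Sum>j<m. cnj (U $$ (i,j)) * cnj (x$j) * y$i)"
    using assms unfolding cinner_def
    by (simp add: mult_mat_vec_def scalar_prod_def sum_distrib_right atLeast0LessThan)
  also have "\<dots> = (\<Sum>j<m. \<Sum>i<n. cnj (x$j) * (cnj (U $$ (i,j)) * y$i))"
    by (subst sum.swap) (simp add: mult_ac)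
  also have "\<dots> = cinner x (adjoint_mat U *\<^sub>v y)"
    using assms unfolding cinner_def adjoint_mat_def
    by (simp add: mult_mat_vec_def scalar_prod_def sum_distrib_left atLeast0LessThan)
  finally show ?thesis .
qed

lemma unitary_nsq:
  assumes "unitary_mat n U" "x \<in> carrier_vec n"
  shows "nsq (U *\<^sub>v x) = nsq x"
proof -
  have U: "U \<in> carrier_mat n n" and a: "adjoint_mat U * U = 1\<^sub>m n" using assms unfolding unitary_mat_def by auto
  have ad: "adjoint_mat U \<in> carrier_mat n n" using U unfolding adjoint_mat_def by auto
  have "cinner (U *\<^sub>v x) (U *\<^sub>v x) = cinner x (adjoint_mat U *\<^sub>v (U *\<^sub>v x))"
    using U assms(2) by (intro cinner_adj) auto
  also have "adjoint_mat U *\<^sub>v (U *\<^sub>v x) = x"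
    using U ad a assms(2) by (simp add: assoc_mult_mat_vec[symmetric])
  finally show ?thesis by (simp add: cinner_self)
qed

lemma sum_split_add: "(\<Sum>i<m+n. h i) = (\<Sum>i<m. h i) + (\<Sum>i<n. h (m+i::nat))"
  by (induction n) (auto simp: add.assoc)

lemma cinner_append:
  assumes "dim_vec u = dim_vec x" "dim_vec v = dim_vec y"
  shows "cinner (u @\<^sub>v v) (x @\<^sub>v y) = cinner u x + cinner v y"
  using assms unfolding cinner_def by (simp add: sum_split_add)

lemma nsq_append: "nsq (u @\<^sub>v v) = nsq u + nsq v"
  unfolding nsq_def by (simp add: sum_split_add)

lemma nsq_smult: "nsq (c \<cdot>\<^sub>v u) = (cmod c)\<^sup>2 * nsq u"
  unfolding nsq_def by (simp add: sum_distrib_left norm_mult power_mult_distrib)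

lemma cinner_smult_right: "dim_vec u = dim_vec x \<Longrightarrow> cinner u (c \<cdot>\<^sub>v x) = c * cinner u x"
  unfolding cinner_def by (simp add: sum_distrib_left mult_ac)

lemma cinner_zero_left: "cinner (0\<^sub>v n) x = 0"
  unfolding cinner_def by simp

fun prerun :: "'a qaut \<Rightarrow> (nat \<Rightarrow> 'a) \<Rightarrow> nat \<Rightarrow> complex vec" where
  "prerun A w 0 = qa_init A"
| "prerun A w (Suc n) = qa_U A (w n) *\<^sub>v prerun A w n"

lemma smono_ge0:
  fixes ns :: "nat \<Rightarrow> nat"
  assumes "strict_mono ns" shows "ns 0 \<le> ns i"
proof (cases i)
  case (Suc j)
  have "ns 0 < ns i" using assms unfolding strict_mono_def Suc by blast
  thus ?thesis by simp
qed simp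

lemma drun_pre:
  assumes "strict_mono ns" "n \<le> ns 0"
  shows "drun A w \<psi> ns n = prerun A w n"
  using assms(2)
proof (induction n)
  case (Suc n)
  have "n \<notin> range ns"
  proof
    assume "n \<in> range ns"
    then obtain i where "n = ns i" by auto
    thus False using Suc.prems smono_ge0[OF assms(1), of i] by simp
  qed
  hence "drun A w \<psi> ns (Suc n) = qa_U A (w n) *\<^sub>v drun A w \<psi> ns n" by simp
  also have "drun A w \<psi> ns n = prerun A w n" using Suc.IH Suc.prems by simp
  finally show ?case by simp
qed simp

lemma qaut_U:
  assumes "is_qaut A" "\<sigma> \<in> qa_alph A"
  shows "unitary_mat (qa_dim A) (qa_U A \<sigma>)" "qa_U A \<sigma> \<in> carrier_mat (qa_dim A) (qa_dim A)"
proof -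
  show U: "unitary_mat (qa_dim A) (qa_U A \<sigma>)" using assms unfolding is_qaut_def by blast
  thus "qa_U A \<sigma> \<in> carrier_mat (qa_dim A) (qa_dim A)" unfolding unitary_mat_def by blast
qed

lemma unit_nsq:
  assumes "unit_vec_c n \<psi>" shows "\<psi> \<in> carrier_vec n \<and> nsq \<psi> = 1"
proof -
  have c: "\<psi> \<in> carrier_vec n" and s: "(\<Sum>i<n. (cmod (\<psi> $ i))\<^sup>2) = 1"
    using assms unfolding unit_vec_c_def by blast+
  have d: "dim_vec \<psi> = n" using c by (rule carrier_vecD)
  have "nsq \<psi> = 1" unfolding nsq_def d by (rule s)
  with c show ?thesis by blast
qed

lemma unit_iff: "unit_vec_c n v \<longleftrightarrow> v \<in> carrier_vec n \<and> nsq v = 1"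
proof
  assume "unit_vec_c n v" thus "v \<in> carrier_vec n \<and> nsq v = 1" by (rule unit_nsq)
next
  assume h: "v \<in> carrier_vec n \<and> nsq v = 1"
  have d: "dim_vec v = n" using h carrier_vecD by blast
  show "unit_vec_c n v" unfolding unit_vec_c_def using h unfolding nsq_def d by blast
qed

lemma qaut_init:
  assumes "is_qaut A"
  shows "qa_init A \<in> carrier_vec (qa_dim A)" "nsq (qa_init A) = 1"
proof -
  have "unit_vec_c (qa_dim A) (qa_init A)" using assms unfolding is_qaut_def by blast
  thus "qa_init A \<in> carrier_vec (qa_dim A)" "nsq (qa_init A) = 1" using unit_nsq by blast+
qed

lemma prerun_props:
  assumes "is_qaut A" "\<forall>i. w i \<in> qa_alph A"
  shows "prerun A w n \<in> carrier_vec (qa_dim A) \<and> nsq (prerun A w n) = 1"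
proof (induction n)
  case 0
  then show ?case using qaut_init[OF assms(1)] by simp
next
  case (Suc n)
  have wn: "w n \<in> qa_alph A" using assms(2) by blast
  have c: "qa_U A (w n) *\<^sub>v prerun A w n \<in> carrier_vec (qa_dim A)"
    using mult_mat_vec_carrier[OF qaut_U(2)[OF assms(1) wn]] Suc.IH by blast
  have "nsq (qa_U A (w n) *\<^sub>v prerun A w n) = nsq (prerun A w n)"
    using unitary_nsq[OF qaut_U(1)[OF assms(1) wn]] Suc.IH by blast
  hence "nsq (qa_U A (w n) *\<^sub>v prerun A w n) = 1" using Suc.IH by simp
  then show ?case using c by simp
qed

lemma drun_carrier:
  assumes "is_qaut A" "\<forall>i. w i \<in> qa_alph A" "\<psi> \<in> carrier_vec (qa_dim A)"
  shows "drun A w \<psi> ns n \<in> carrier_vec (qa_dim A)"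
proof (induction n)
  case 0
  then show ?case using qaut_init[OF assms(1)] by simp
next
  case (Suc n)
  have wn: "w n \<in> qa_alph A" using assms(2) by blast
  have "(if n \<in> range ns then \<psi> else drun A w \<psi> ns n) \<in> carrier_vec (qa_dim A)"
    using Suc.IH assms(3) by simp
  hence "qa_U A (w n) *\<^sub>v (if n \<in> range ns then \<psi> else drun A w \<psi> ns n) \<in> carrier_vec (qa_dim A)"
    by (rule mult_mat_vec_carrier[OF qaut_U(2)[OF assms(1) wn]])
  then show ?case by simp
qed

lemma ov_bound:
  assumes "nsq x = 1" "nsq y = 1" "dim_vec x = dim_vec y"
  shows "(cmod (cinner x y))\<^sup>2 \<le> 1"
  using cinner_CS[OF assms(3)] assms by simp

definition Sset :: "'a qaut \<Rightarrow> (nat \<Rightarrow> 'a) \<Rightarrow> real set" where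
  "Sset A w = {(INF i. (cmod (cinner \<psi> (drun A w \<psi> ns (ns i))))\<^sup>2) | \<psi> ns.
      \<psi> \<in> qa_F A \<and> unit_vec_c (qa_dim A) \<psi> \<and> strict_mono ns}"

lemma fD_Sset: "fD A w = Sup (insert 0 (Sset A w))"
  unfolding fD_def Sset_def by simp

lemma INF_bounds:
  fixes f :: "nat \<Rightarrow> real"
  assumes "\<And>i. 0 \<le> f i" "f 0 \<le> 1"
  shows "0 \<le> (INF i. f i) \<and> (INF i. f i) \<le> 1"
proof
  show "0 \<le> (INF i. f i)" by (rule cINF_greatest) (auto simp: assms)
  have "(INF i. f i) \<le> f 0" by (rule cINF_lower) (auto intro!: bdd_belowI[of _ 0] simp: assms)
  thus "(INF i. f i) \<le> 1" using assms by simp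
qed

lemma Sset_bounds_gen:
  assumes "\<And>\<psi> ns. \<psi> \<in> qa_F A \<Longrightarrow> unit_vec_c (qa_dim A) \<psi> \<Longrightarrow> strict_mono ns \<Longrightarrow>
     (cmod (cinner \<psi> (drun A w \<psi> ns (ns 0))))\<^sup>2 \<le> 1"
    and "x \<in> Sset A w"
  shows "0 \<le> x \<and> x \<le> 1"
proof -
  obtain \<psi> ns where x: "x = (INF i. (cmod (cinner \<psi> (drun A w \<psi> ns (ns i))))\<^sup>2)"
    and c: "\<psi> \<in> qa_F A" "unit_vec_c (qa_dim A) \<psi>" "strict_mono ns"
    using assms(2) unfolding Sset_def by blast
  show ?thesis unfolding x
    by (rule INF_bounds) (simp, rule assms(1)[OF c])
qed

lemma Sup_bdd:
  assumes "\<And>x. x \<in> X \<Longrightarrow> 0 \<le> x \<and> x \<le> (1::real)"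
  shows "bdd_above (insert 0 X)"
proof (rule bdd_aboveI[of _ 1])
  fix x assume "x \<in> insert 0 X"
  thus "x \<le> 1" using assms by (cases "x = 0") auto
qed

lemma Sset_bounds_A:
  assumes "is_qaut A" "\<forall>i. w i \<in> qa_alph A"
  shows "x \<in> Sset A w \<Longrightarrow> 0 \<le> x \<and> x \<le> 1"
proof (rule Sset_bounds_gen)
  fix \<psi> and ns :: "nat \<Rightarrow> nat"
  assume h: "\<psi> \<in> qa_F A" "unit_vec_c (qa_dim A) \<psi>" "strict_mono ns"
  have d: "drun A w \<psi> ns (ns 0) = prerun A w (ns 0)" by (rule drun_pre) (simp_all add: h(3))
  have p: "prerun A w (ns 0) \<in> carrier_vec (qa_dim A)" "nsq (prerun A w (ns 0)) = 1"
    using prerun_props[OF assms, of "ns 0"] by auto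
  have u: "\<psi> \<in> carrier_vec (qa_dim A)" "nsq \<psi> = 1" using unit_nsq[OF h(2)] by auto
  show "(cmod (cinner \<psi> (drun A w \<psi> ns (ns 0))))\<^sup>2 \<le> 1"
    unfolding d
  proof (rule ov_bound)
    show "dim_vec \<psi> = dim_vec (prerun A w (ns 0))" using p(1) u(1) by (simp add: carrier_vecD)
  qed (simp_all add: p u)
qed

lemma qaut_F:
  assumes "is_qaut A"
  shows "qa_F A \<subseteq> carrier_vec (qa_dim A)" "0\<^sub>v (qa_dim A) \<in> qa_F A"
proof -
  have "csubspace_vec (qa_dim A) (qa_F A)" using assms unfolding is_qaut_def by blast
  hence h: "qa_F A \<subseteq> carrier_vec (qa_dim A) \<and> 0\<^sub>v (qa_dim A) \<in> qa_F A"
    unfolding csubspace_vec_def by (elim conjE) (intro conjI)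
  thus "qa_F A \<subseteq> carrier_vec (qa_dim A)" "0\<^sub>v (qa_dim A) \<in> qa_F A" by blast+
qed

lemma wd_F:
  assumes "\<psi> \<in> qa_F (wdsum a A b B)"
  obtains u v where "\<psi> = u @\<^sub>v v" "u \<in> qa_F A" "v \<in> qa_F B"
proof -
  have "\<psi> \<in> {u @\<^sub>v v | u v. u \<in> qa_F A \<and> v \<in> qa_F B}" using assms by (simp add: wdsum_def)
  thus ?thesis using that by blast
qed

lemma wd_F_intro:
  "u \<in> qa_F A \<Longrightarrow> v \<in> qa_F B \<Longrightarrow> u @\<^sub>v v \<in> qa_F (wdsum a A b B)"
  unfolding wdsum_def by (simp, blast)

lemma drun_wd:
  assumes A: "is_qaut A" and B: "is_qaut B" and wA: "\<forall>i. w i \<in> qa_alph A"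
    and al: "qa_alph A = qa_alph B"
    and u: "u \<in> carrier_vec (qa_dim A)" and v: "v \<in> carrier_vec (qa_dim B)"
    and ns: "strict_mono ns"
  shows "drun (wdsum a A b B) w (u @\<^sub>v v) ns n =
    (if n \<le> ns 0 then (a \<cdot>\<^sub>v prerun A w n) @\<^sub>v (b \<cdot>\<^sub>v prerun B w n)
     else drun A w u ns n @\<^sub>v drun B w v ns n)"
proof (induction n)
  case 0
  then show ?case by (simp add: wdsum_def)
next
  case (Suc n)
  let ?W = "wdsum a A b B"
  have wAn: "w n \<in> qa_alph A" using wA by blast
  have wB: "\<forall>i. w i \<in> qa_alph B" using wA al by simp
  have wBn: "w n \<in> qa_alph B" using wB by blast
  have UA: "qa_U A (w n) \<in> carrier_mat (qa_dim A) (qa_dim A)" by (rule qaut_U(2)[OF A wAn])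
  have UB: "qa_U B (w n) \<in> carrier_mat (qa_dim B) (qa_dim B)" by (rule qaut_U(2)[OF B wBn])
  have Uw: "qa_U ?W (w n) = four_block_mat (qa_U A (w n)) (0\<^sub>m (qa_dim A) (qa_dim B))
                                (0\<^sub>m (qa_dim B) (qa_dim A)) (qa_U B (w n))"
    by (simp add: wdsum_def)
  show ?case
  proof (cases "n \<in> range ns")
    case True
    then obtain i where i: "n = ns i" by auto
    hence nle: "\<not> Suc n \<le> ns 0" using smono_ge0[OF ns, of i] by simp
    have "drun ?W w (u @\<^sub>v v) ns (Suc n) = qa_U ?W (w n) *\<^sub>v (u @\<^sub>v v)"
      using True by (simp only: drun.simps if_True)
    also have "\<dots> = qa_U A (w n) *\<^sub>v u @\<^sub>v qa_U B (w n) *\<^sub>v v"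
      unfolding Uw by (rule mult_mat_vec_split[OF UA UB u v])
    also have "\<dots> = drun A w u ns (Suc n) @\<^sub>v drun B w v ns (Suc n)"
      using True by (simp only: drun.simps if_True)
    finally show ?thesis using nle by (simp only: if_False)
  next
    case False
    have step: "drun X w \<phi> ns (Suc n) = qa_U X (w n) *\<^sub>v drun X w \<phi> ns n" for X :: "'a qaut" and \<phi>
      using False by (simp only: drun.simps if_False)
    show ?thesis
    proof (cases "Suc n \<le> ns 0")
      case True
      have le: "n \<le> ns 0" using True by simp
      have pA: "prerun A w n \<in> carrier_vec (qa_dim A)" using prerun_props[OF A wA] by blast
      have pB: "prerun B w n \<in> carrier_vec (qa_dim B)" using prerun_props[OF B wB] by blast
      have "drun ?W w (u @\<^sub>v v) ns (Suc n) = qa_U ?W (w n) *\<^sub>v ((a \<cdot>\<^sub>v prerun A w n) @\<^sub>v (b \<cdot>\<^sub>v prerun B w n))"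
        using step Suc.IH le by (simp only: if_True)
      also have "\<dots> = qa_U A (w n) *\<^sub>v (a \<cdot>\<^sub>v prerun A w n) @\<^sub>v qa_U B (w n) *\<^sub>v (b \<cdot>\<^sub>v prerun B w n)"
        unfolding Uw
        by (rule mult_mat_vec_split[OF UA UB smult_carrier_vec[THEN iffD2, OF pA] smult_carrier_vec[THEN iffD2, OF pB]])
      also have "\<dots> = (a \<cdot>\<^sub>v prerun A w (Suc n)) @\<^sub>v (b \<cdot>\<^sub>v prerun B w (Suc n))"
        using mult_mat_vec[OF UA pA] mult_mat_vec[OF UB pB] by (simp only: prerun.simps)
      finally show ?thesis using True by (simp only: if_True)
    next
      case F2: False
      have "n \<noteq> ns 0" using False by auto
      hence nle: "\<not> n \<le> ns 0" using F2 by simp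
      have dA: "drun A w u ns n \<in> carrier_vec (qa_dim A)" using drun_carrier[OF A wA u] .
      have dB: "drun B w v ns n \<in> carrier_vec (qa_dim B)" using drun_carrier[OF B wB v] .
      have "drun ?W w (u @\<^sub>v v) ns (Suc n) = qa_U ?W (w n) *\<^sub>v (drun A w u ns n @\<^sub>v drun B w v ns n)"
        using step Suc.IH nle by (simp only: if_False)
      also have "\<dots> = qa_U A (w n) *\<^sub>v drun A w u ns n @\<^sub>v qa_U B (w n) *\<^sub>v drun B w v ns n"
        unfolding Uw by (rule mult_mat_vec_split[OF UA UB dA dB])
      also have "\<dots> = drun A w u ns (Suc n) @\<^sub>v drun B w v ns (Suc n)"
        using step by (simp only:)
      finally show ?thesis using F2 by (simp only: if_False)
    qed
  qed
qed

lemma Sset_bounds_wd: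
  assumes A: "is_qaut A" and B: "is_qaut B" and wA: "\<forall>i. w i \<in> qa_alph A"
    and al: "qa_alph A = qa_alph B" and ab: "(cmod a)\<^sup>2 + (cmod b)\<^sup>2 = 1"
  shows "x \<in> Sset (wdsum a A b B) w \<Longrightarrow> 0 \<le> x \<and> x \<le> 1"
proof (rule Sset_bounds_gen)
  fix \<psi> and ns :: "nat \<Rightarrow> nat"
  assume F: "\<psi> \<in> qa_F (wdsum a A b B)" and un: "unit_vec_c (qa_dim (wdsum a A b B)) \<psi>"
    and ns: "strict_mono ns"
  have wB: "\<forall>i. w i \<in> qa_alph B" using wA al by simp
  obtain u v where uv: "\<psi> = u @\<^sub>v v" "u \<in> qa_F A" "v \<in> qa_F B" using wd_F[OF F] by blast
  have u: "u \<in> carrier_vec (qa_dim A)" using uv(2) qaut_F(1)[OF A] by blast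
  have v: "v \<in> carrier_vec (qa_dim B)" using uv(3) qaut_F(1)[OF B] by blast
  have d: "drun (wdsum a A b B) w \<psi> ns (ns 0) = (a \<cdot>\<^sub>v prerun A w (ns 0)) @\<^sub>v (b \<cdot>\<^sub>v prerun B w (ns 0))"
    using drun_wd[OF A B wA al u v ns] uv by simp
  have pA: "prerun A w (ns 0) \<in> carrier_vec (qa_dim A) \<and> nsq (prerun A w (ns 0)) = 1"
    using prerun_props[OF A wA] by auto
  have pB: "prerun B w (ns 0) \<in> carrier_vec (qa_dim B) \<and> nsq (prerun B w (ns 0)) = 1"
    using prerun_props[OF B wB] by auto
  have ps: "\<psi> \<in> carrier_vec (qa_dim A + qa_dim B)" "nsq \<psi> = 1"
    using unit_nsq[OF un] by (simp_all add: wdsum_def)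
  show "(cmod (cinner \<psi> (drun (wdsum a A b B) w \<psi> ns (ns 0))))\<^sup>2 \<le> 1"
    unfolding d
  proof (rule ov_bound)
    show "nsq \<psi> = 1" by (rule ps(2))
    show "nsq ((a \<cdot>\<^sub>v prerun A w (ns 0)) @\<^sub>v (b \<cdot>\<^sub>v prerun B w (ns 0))) = 1"
      using pA pB ab by (simp add: nsq_append nsq_smult)
    show "dim_vec \<psi> = dim_vec ((a \<cdot>\<^sub>v prerun A w (ns 0)) @\<^sub>v (b \<cdot>\<^sub>v prerun B w (ns 0)))"
    proof -
      have "dim_vec (prerun A w (ns 0)) = qa_dim A" "dim_vec (prerun B w (ns 0)) = qa_dim B"
        "dim_vec \<psi> = qa_dim A + qa_dim B" using pA pB ps(1) carrier_vecD by blast+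
      thus ?thesis by simp
    qed
  qed
qed

lemma sup_scale:
  fixes c :: real
  assumes "0 \<le> c" "bdd_above Y" "0 \<in> Y" "\<And>x. x \<in> X \<Longrightarrow> \<exists>y\<in>Y. c * x \<le> y"
  shows "c * Sup (insert 0 X) \<le> Sup Y"
proof (cases "c = 0")
  case True
  then show ?thesis using cSup_upper[OF assms(3,2)] by simp
next
  case False
  hence c: "c > 0" using assms(1) by simp
  have "Sup (insert 0 X) \<le> Sup Y / c"
  proof (rule cSup_least)
    fix x assume "x \<in> insert 0 X"
    then show "x \<le> Sup Y / c"
    proof
      assume "x = 0" thus ?thesis using cSup_upper[OF assms(3,2)] c by simp
    next
      assume "x \<in> X"
      then obtain y where "y \<in> Y" "c * x \<le> y" using assms(4) by blast
      hence "c * x \<le> Sup Y" using cSup_upper[OF _ assms(2)] by (meson order_trans)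
      thus ?thesis using c by (simp add: field_simps)
    qed
  qed simp
  thus ?thesis using c by (simp add: field_simps)
qed

lemma INF_lower0:
  fixes f :: "nat \<Rightarrow> real"
  assumes "\<And>i. 0 \<le> f i"
  shows "(INF i. f i) \<le> f j"
  by (rule cINF_lower) (auto intro!: bdd_belowI[of _ 0] simp: assms)

lemma part2_a:
  assumes A: "is_qaut A" and B: "is_qaut B" and wA: "\<forall>i. w i \<in> qa_alph A"
    and al: "qa_alph A = qa_alph B" and ab: "(cmod a)\<^sup>2 + (cmod b)\<^sup>2 = 1"
  shows "(cmod a)\<^sup>2 * fD A w \<le> fD (wdsum a A b B) w"
  unfolding fD_Sset
proof (rule sup_scale)
  let ?W = "wdsum a A b B"
  show "bdd_above (insert 0 (Sset ?W w))"
    by (rule Sup_bdd) (rule Sset_bounds_wd[OF A B wA al ab])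
  fix x assume "x \<in> Sset A w"
  then obtain \<psi> ns where x: "x = (INF i. (cmod (cinner \<psi> (drun A w \<psi> ns (ns i))))\<^sup>2)"
    and F: "\<psi> \<in> qa_F A" and un: "unit_vec_c (qa_dim A) \<psi>" and ns: "strict_mono ns"
    unfolding Sset_def by blast
  have u: "\<psi> \<in> carrier_vec (qa_dim A)" "nsq \<psi> = 1" using unit_nsq[OF un] by auto
  have z: "0\<^sub>v (qa_dim B) \<in> qa_F B" "0\<^sub>v (qa_dim B) \<in> carrier_vec (qa_dim B)"
    using qaut_F(2)[OF B] zero_carrier_vec by blast+
  let ?p = "\<psi> @\<^sub>v 0\<^sub>v (qa_dim B)"
  have pF: "?p \<in> qa_F ?W" using F z by (simp add: wd_F_intro)
  have pu: "unit_vec_c (qa_dim ?W) ?p" using u z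
    by (simp add: unit_iff wdsum_def nsq_append) (simp add: nsq_def)
  let ?f = "\<lambda>i. (cmod (cinner \<psi> (drun A w \<psi> ns (ns i))))\<^sup>2"
  let ?g = "\<lambda>i. (cmod (cinner ?p (drun ?W w ?p ns (ns i))))\<^sup>2"
  have a1: "(cmod a)\<^sup>2 \<le> 1" using ab by (smt (verit) zero_le_power2)
  have key: "(cmod a)\<^sup>2 * ?f i \<le> ?g i" for i
  proof (cases "ns i \<le> ns 0")
    case True
    have pA: "prerun A w (ns i) \<in> carrier_vec (qa_dim A)" using prerun_props[OF A wA] by auto
    have pB: "prerun B w (ns i) \<in> carrier_vec (qa_dim B)" using prerun_props[OF B] wA al by auto
    have "?g i = (cmod (a * cinner \<psi> (prerun A w (ns i))))\<^sup>2"
      using drun_wd[OF A B wA al u(1) z(2) ns, of a b "ns i"] True pA pB u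
      by (simp add: cinner_append cinner_zero_left cinner_smult_right)
    moreover have "?f i = (cmod (cinner \<psi> (prerun A w (ns i))))\<^sup>2"
      using drun_pre[OF ns True, where A=A and w=w and \<psi>=\<psi>] by simp
    ultimately show ?thesis by (simp add: norm_mult power_mult_distrib)
  next
    case False
    have wB: "\<forall>i. w i \<in> qa_alph B" using wA al by simp
    have dA: "drun A w \<psi> ns (ns i) \<in> carrier_vec (qa_dim A)" using drun_carrier[OF A wA u(1)] .
    have dB: "drun B w (0\<^sub>v (qa_dim B)) ns (ns i) \<in> carrier_vec (qa_dim B)" using drun_carrier[OF B wB z(2)] .
    have "?g i = ?f i"
      using drun_wd[OF A B wA al u(1) z(2) ns, of a b "ns i"] False dA dB u
      by (simp add: cinner_append cinner_zero_left)
    thus ?thesis using a1 by (simp add: mult_left_le_one_le)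
  qed
  have "(cmod a)\<^sup>2 * x \<le> (INF i. ?g i)"
  proof (rule cINF_greatest)
    fix i
    have "(cmod a)\<^sup>2 * x \<le> (cmod a)\<^sup>2 * ?f i"
      unfolding x by (rule mult_left_mono) (auto intro: INF_lower0)
    thus "(cmod a)\<^sup>2 * x \<le> ?g i" using key[of i] by simp
  qed simp
  moreover have "(INF i. ?g i) \<in> insert 0 (Sset ?W w)"
    unfolding Sset_def using pF pu ns by blast
  ultimately show "\<exists>y\<in>insert 0 (Sset ?W w). (cmod a)\<^sup>2 * x \<le> y" by blast
qed simp_all

lemma part2_b:
  assumes A: "is_qaut A" and B: "is_qaut B" and wA: "\<forall>i. w i \<in> qa_alph A"
    and al: "qa_alph A = qa_alph B" and ab: "(cmod a)\<^sup>2 + (cmod b)\<^sup>2 = 1"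
  shows "(cmod b)\<^sup>2 * fD B w \<le> fD (wdsum a A b B) w"
  unfolding fD_Sset
proof (rule sup_scale)
  let ?W = "wdsum a A b B"
  show "bdd_above (insert 0 (Sset ?W w))"
    by (rule Sup_bdd) (rule Sset_bounds_wd[OF A B wA al ab])
  fix x assume "x \<in> Sset B w"
  then obtain \<psi> ns where x: "x = (INF i. (cmod (cinner \<psi> (drun B w \<psi> ns (ns i))))\<^sup>2)"
    and F: "\<psi> \<in> qa_F B" and un: "unit_vec_c (qa_dim B) \<psi>" and ns: "strict_mono ns"
    unfolding Sset_def by blast
  have u: "\<psi> \<in> carrier_vec (qa_dim B)" "nsq \<psi> = 1" using unit_nsq[OF un] by auto
  have z: "0\<^sub>v (qa_dim A) \<in> qa_F A" "0\<^sub>v (qa_dim A) \<in> carrier_vec (qa_dim A)"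
    using qaut_F(2)[OF A] zero_carrier_vec by blast+
  let ?p = "0\<^sub>v (qa_dim A) @\<^sub>v \<psi>"
  have pF: "?p \<in> qa_F ?W" using F z by (simp add: wd_F_intro)
  have pu: "unit_vec_c (qa_dim ?W) ?p" using u z
    by (simp add: unit_iff wdsum_def nsq_append) (simp add: nsq_def)
  let ?f = "\<lambda>i. (cmod (cinner \<psi> (drun B w \<psi> ns (ns i))))\<^sup>2"
  let ?g = "\<lambda>i. (cmod (cinner ?p (drun ?W w ?p ns (ns i))))\<^sup>2"
  have a1: "(cmod b)\<^sup>2 \<le> 1" using ab by (smt (verit) zero_le_power2)
  have key: "(cmod b)\<^sup>2 * ?f i \<le> ?g i" for i
  proof (cases "ns i \<le> ns 0")
    case True
    have pA: "prerun A w (ns i) \<in> carrier_vec (qa_dim A)" using prerun_props[OF A wA] by auto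
    have pB: "prerun B w (ns i) \<in> carrier_vec (qa_dim B)" using prerun_props[OF B] wA al by auto
    have "?g i = (cmod (b * cinner \<psi> (prerun B w (ns i))))\<^sup>2"
      using drun_wd[OF A B wA al z(2) u(1) ns, of a b "ns i"] True pA pB u
      by (simp add: cinner_append cinner_zero_left cinner_smult_right)
    moreover have "?f i = (cmod (cinner \<psi> (prerun B w (ns i))))\<^sup>2"
      using drun_pre[OF ns True, where A=B and w=w and \<psi>=\<psi>] by simp
    ultimately show ?thesis by (simp add: norm_mult power_mult_distrib)
  next
    case False
    have wB: "\<forall>i. w i \<in> qa_alph B" using wA al by simp
    have dA: "drun A w (0\<^sub>v (qa_dim A)) ns (ns i) \<in> carrier_vec (qa_dim A)" using drun_carrier[OF A wA z(2)] .
    have dB: "drun B w \<psi> ns (ns i) \<in> carrier_vec (qa_dim B)" using drun_carrier[OF B wB u(1)] .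
    have "?g i = ?f i"
      using drun_wd[OF A B wA al z(2) u(1) ns, of a b "ns i"] False dA dB u
      by (simp add: cinner_append cinner_zero_left)
    thus ?thesis using a1 by (simp add: mult_left_le_one_le)
  qed
  have "(cmod b)\<^sup>2 * x \<le> (INF i. ?g i)"
  proof (rule cINF_greatest)
    fix i
    have "(cmod b)\<^sup>2 * x \<le> (cmod b)\<^sup>2 * ?f i"
      unfolding x by (rule mult_left_mono) (auto intro: INF_lower0)
    thus "(cmod b)\<^sup>2 * x \<le> ?g i" using key[of i] by simp
  qed simp
  moreover have "(INF i. ?g i) \<in> insert 0 (Sset ?W w)"
    unfolding Sset_def using pF pu ns by blast
  ultimately show "\<exists>y\<in>insert 0 (Sset ?W w). (cmod b)\<^sup>2 * x \<le> y" by blast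
qed simp_all

definition e0 :: "complex vec" where "e0 = vec 2 (\<lambda>i. if i = 0 then 1 else 0)"

definition Acon :: "'a set \<Rightarrow> real \<Rightarrow> 'a qaut" where
  "Acon S lam = \<lparr> qa_dim = 2,
     qa_init = vec 2 (\<lambda>i. if i = 0 then complex_of_real (sqrt lam) else complex_of_real (sqrt (1 - lam))),
     qa_alph = S, qa_U = (\<lambda>_. 1\<^sub>m 2), qa_F = {c \<cdot>\<^sub>v e0 | c. True} \<rparr>"

lemma sum2: "(\<Sum>i<2. f i) = f 0 + f (1::nat)"
  by (simp add: numeral_2_eq_2)

lemma Acon_qaut:
  assumes "finite S" "0 \<le> lam" "lam \<le> 1"
  shows "is_qaut (Acon S lam)"
proof -
  have "adjoint_mat (1\<^sub>m 2) = (1\<^sub>m 2 :: complex mat)"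
    by (rule eq_matI) (auto simp: adjoint_mat_def)
  hence U: "unitary_mat 2 (1\<^sub>m 2)" unfolding unitary_mat_def by simp
  have I: "unit_vec_c 2 (qa_init (Acon S lam))"
    using assms unfolding unit_vec_c_def Acon_def by (simp add: sum2)
  have F: "csubspace_vec 2 {c \<cdot>\<^sub>v e0 | c. True}"
    unfolding csubspace_vec_def
  proof (intro conjI ballI allI)
    show "{c \<cdot>\<^sub>v e0 |c. True} \<subseteq> carrier_vec 2" by (auto simp: e0_def)
    show "0\<^sub>v 2 \<in> {c \<cdot>\<^sub>v e0 |c. True}"
      by (rule CollectI, rule exI[of _ 0]) (auto simp: e0_def)
    fix u v assume "u \<in> {c \<cdot>\<^sub>v e0 |c. True}" "v \<in> {c \<cdot>\<^sub>v e0 |c. True}"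
    then obtain c d where "u = c \<cdot>\<^sub>v e0" "v = d \<cdot>\<^sub>v e0" by auto
    thus "u + v \<in> {c \<cdot>\<^sub>v e0 |c. True}"
      by (intro CollectI exI[of _ "c + d"]) (auto simp: add_smult_distrib_vec)
  next
    fix c u assume "u \<in> {c \<cdot>\<^sub>v e0 |c. True}"
    then obtain d where "u = d \<cdot>\<^sub>v e0" by auto
    thus "c \<cdot>\<^sub>v u \<in> {c \<cdot>\<^sub>v e0 |c. True}"
      by (intro CollectI exI[of _ "c * d"]) (auto simp: smult_smult_assoc)
  qed
  show ?thesis using assms U I F unfolding is_qaut_def by (simp add: Acon_def)
qed

lemma Acon_U: "qa_U (Acon S lam) \<sigma> = 1\<^sub>m 2"
  by (simp add: Acon_def)

lemma Acon_init_carrier: "qa_init (Acon S lam) \<in> carrier_vec 2"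
  by (simp add: Acon_def)

lemma drun_Acon:
  assumes "strict_mono ns" "\<psi> \<in> carrier_vec 2"
  shows "drun (Acon S lam) w \<psi> ns n = (if n \<le> ns 0 then qa_init (Acon S lam) else \<psi>)"
proof (induction n)
  case 0
  then show ?case by simp
next
  case (Suc n)
  have ic: "qa_init (Acon S lam) \<in> carrier_vec 2" by (rule Acon_init_carrier)
  show ?case
  proof (cases "n \<in> range ns")
    case True
    then obtain i where "n = ns i" by auto
    hence nle: "\<not> Suc n \<le> ns 0" using smono_ge0[OF assms(1), of i] by simp
    have "drun (Acon S lam) w \<psi> ns (Suc n) = 1\<^sub>m 2 *\<^sub>v \<psi>"
      using True by (simp only: drun.simps if_True Acon_U)
    also have "\<dots> = \<psi>" using assms(2) by (rule one_mult_mat_vec)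
    finally show ?thesis using nle by (simp only: if_False)
  next
    case False
    have st: "drun (Acon S lam) w \<psi> ns (Suc n) = 1\<^sub>m 2 *\<^sub>v drun (Acon S lam) w \<psi> ns n"
      using False by (simp only: drun.simps if_False Acon_U)
    have nn: "n \<noteq> ns 0" using False by auto
    show ?thesis
    proof (cases "Suc n \<le> ns 0")
      case True
      hence "n \<le> ns 0" by simp
      hence "drun (Acon S lam) w \<psi> ns n = qa_init (Acon S lam)" using Suc.IH by (simp only: if_True)
      hence "drun (Acon S lam) w \<psi> ns (Suc n) = qa_init (Acon S lam)"
        using st one_mult_mat_vec[OF ic] by simp
      thus ?thesis using True by (simp only: if_True)
    next
      case F2: False
      hence "\<not> n \<le> ns 0" using nn by simp
      hence "drun (Acon S lam) w \<psi> ns n = \<psi>" using Suc.IH by (simp only: if_False)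
      hence "drun (Acon S lam) w \<psi> ns (Suc n) = \<psi>"
        using st one_mult_mat_vec[OF assms(2)] by simp
      thus ?thesis using F2 by (simp only: if_False)
    qed
  qed
qed

lemma Acon_dim: "qa_dim (Acon S lam) = 2"
  by (simp add: Acon_def)

lemma Acon_F: "qa_F (Acon S lam) = {c \<cdot>\<^sub>v e0 | c. True}"
  by (simp add: Acon_def)

lemma e0_nsq: "nsq e0 = 1"
  by (simp add: nsq_def e0_def sum2)

lemma e0_carrier: "e0 \<in> carrier_vec 2"
  by (simp add: e0_def)

lemma Acon_cinner: "cinner (c \<cdot>\<^sub>v e0) (qa_init (Acon S lam)) = cnj c * complex_of_real (sqrt lam)"
proof -
  have "cinner (c \<cdot>\<^sub>v e0) (qa_init (Acon S lam)) =
     (\<Sum>i<2. cnj ((c \<cdot>\<^sub>v e0) $ i) * (qa_init (Acon S lam)) $ i)"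
    by (simp add: cinner_def e0_def)
  also have "\<dots> = cnj ((c \<cdot>\<^sub>v e0) $ 0) * (qa_init (Acon S lam)) $ 0 + cnj ((c \<cdot>\<^sub>v e0) $ 1) * (qa_init (Acon S lam)) $ 1"
    by (rule sum2)
  also have "\<dots> = cnj c * complex_of_real (sqrt lam)"
    by (simp add: e0_def Acon_def)
  finally show ?thesis .
qed

lemma Sset_Acon:
  assumes "finite S" "0 \<le> lam" "lam \<le> 1"
  shows "Sset (Acon S lam) w = {lam}"
proof -
  have mem: "x = lam" if xin: "x \<in> Sset (Acon S lam) w" for x
  proof -
    obtain \<psi> ns where x: "x = (INF i. (cmod (cinner \<psi> (drun (Acon S lam) w \<psi> ns (ns i))))\<^sup>2)"
      and F: "\<psi> \<in> qa_F (Acon S lam)" and un0: "unit_vec_c (qa_dim (Acon S lam)) \<psi>" and ns: "strict_mono ns"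
      using xin unfolding Sset_def by blast
    have un: "unit_vec_c 2 \<psi>" using un0 by (simp only: Acon_dim)
    have "\<psi> \<in> {c \<cdot>\<^sub>v e0 | c. True}" using F by (simp only: Acon_F)
    then obtain c where c: "\<psi> = c \<cdot>\<^sub>v e0" by blast
    have pc: "\<psi> \<in> carrier_vec 2" "nsq \<psi> = 1" using unit_nsq[OF un] by blast+
    have "(cmod c)\<^sup>2 = 1" using pc(2) unfolding c nsq_smult e0_nsq by simp
    hence "cmod c = 1 \<or> cmod c = - 1" by (simp add: power2_eq_1_iff)
    hence cm: "cmod c = 1" using norm_ge_zero[of c] by linarith
    have f0: "(cmod (cinner \<psi> (drun (Acon S lam) w \<psi> ns (ns 0))))\<^sup>2 = lam"
    proof -
      have d0: "drun (Acon S lam) w \<psi> ns (ns 0) = qa_init (Acon S lam)"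
        using drun_Acon[OF ns pc(1), of S lam w "ns 0"] by simp
      have "cinner \<psi> (qa_init (Acon S lam)) = cnj c * complex_of_real (sqrt lam)"
        unfolding c by (rule Acon_cinner)
      hence "cmod (cinner \<psi> (qa_init (Acon S lam))) = sqrt lam"
        using cm assms(2) by (simp add: norm_mult)
      thus ?thesis unfolding d0 using assms(2) by simp
    qed
    have fi: "(cmod (cinner \<psi> (drun (Acon S lam) w \<psi> ns (ns i))))\<^sup>2 = 1" if "i \<noteq> 0" for i
    proof -
      have "0 < i" using that by simp
      hence "ns 0 < ns i" using ns unfolding strict_mono_def by blast
      hence "\<not> ns i \<le> ns 0" by simp
      hence "drun (Acon S lam) w \<psi> ns (ns i) = \<psi>" using drun_Acon[OF ns pc(1), of S lam w "ns i"] by (simp only: if_False)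
      thus ?thesis using pc by (simp add: cinner_self)
    qed
    show ?thesis unfolding x
    proof (rule cInf_eq_minimum)
      show "lam \<in> range (\<lambda>i. (cmod (cinner \<psi> (drun (Acon S lam) w \<psi> ns (ns i))))\<^sup>2)"
      proof -
        have "(\<lambda>i. (cmod (cinner \<psi> (drun (Acon S lam) w \<psi> ns (ns i))))\<^sup>2) 0
           \<in> range (\<lambda>i. (cmod (cinner \<psi> (drun (Acon S lam) w \<psi> ns (ns i))))\<^sup>2)" by (rule rangeI)
        thus ?thesis by (simp only: f0)
      qed
      fix y assume "y \<in> range (\<lambda>i. (cmod (cinner \<psi> (drun (Acon S lam) w \<psi> ns (ns i))))\<^sup>2)"
      then obtain i where "y = (cmod (cinner \<psi> (drun (Acon S lam) w \<psi> ns (ns i))))\<^sup>2" by auto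
      thus "lam \<le> y"
      proof (cases "i = 0")
        case True thus ?thesis using \<open>y = _\<close> f0 by simp
      next
        case False thus ?thesis using \<open>y = _\<close> fi[of i] assms(3) by simp
      qed
    qed
  qed
  moreover have "Sset (Acon S lam) w \<noteq> {}"
  proof -
    have "e0 = 1 \<cdot>\<^sub>v e0" by simp
    hence "e0 \<in> {c \<cdot>\<^sub>v e0 | c. True}" by blast
    hence "e0 \<in> qa_F (Acon S lam)" by (simp only: Acon_F)
    moreover have "unit_vec_c (qa_dim (Acon S lam)) e0"
      unfolding Acon_dim unit_iff using e0_nsq e0_carrier by blast
    moreover have "strict_mono (id :: nat \<Rightarrow> nat)" by (simp add: strict_mono_def)
    ultimately show ?thesis unfolding Sset_def by blast
  qed
  ultimately show ?thesis by auto
qed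

theorem proposition5:
  shows "(\<forall>(\<Sigma>::'a set) (lam::real). finite \<Sigma> \<and> 0 \<le> lam \<and> lam \<le> 1 \<longrightarrow>
            (\<exists>A::'a qaut. is_qaut A \<and> qa_alph A = \<Sigma> \<and>
               (\<forall>w. (\<forall>i. w i \<in> \<Sigma>) \<longrightarrow> fD A w = lam)))
       \<and> (\<forall>(A::'a qaut) B a b w. is_qaut A \<and> is_qaut B \<and> qa_alph A = qa_alph B \<and>
            (cmod a)\<^sup>2 + (cmod b)\<^sup>2 = 1 \<and> (\<forall>i. w i \<in> qa_alph A) \<longrightarrow>
            fD (wdsum a A b B) w \<ge> max ((cmod a)\<^sup>2 * fD A w) ((cmod b)\<^sup>2 * fD B w))"
proof (intro conjI allI impI)
  fix \<Sigma> :: "'a set" and lam :: real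
  assume h: "finite \<Sigma> \<and> 0 \<le> lam \<and> lam \<le> 1"
  show "\<exists>A::'a qaut. is_qaut A \<and> qa_alph A = \<Sigma> \<and> (\<forall>w. (\<forall>i. w i \<in> \<Sigma>) \<longrightarrow> fD A w = lam)"
  proof (intro exI conjI allI impI)
    show "is_qaut (Acon \<Sigma> lam)" using h Acon_qaut by blast
    show "qa_alph (Acon \<Sigma> lam) = \<Sigma>" by (simp add: Acon_def)
    fix w :: "nat \<Rightarrow> 'a"
    have "Sup {0, lam} = lam" by (rule cSup_eq_maximum) (use h in auto)
    thus "fD (Acon \<Sigma> lam) w = lam" unfolding fD_Sset using h Sset_Acon[of \<Sigma> lam w]
      by simp
  qed
next
  fix A B :: "'a qaut" and a b :: complex and w :: "nat \<Rightarrow> 'a"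
  assume h: "is_qaut A \<and> is_qaut B \<and> qa_alph A = qa_alph B \<and>
            (cmod a)\<^sup>2 + (cmod b)\<^sup>2 = 1 \<and> (\<forall>i. w i \<in> qa_alph A)"
  show "fD (wdsum a A b B) w \<ge> max ((cmod a)\<^sup>2 * fD A w) ((cmod b)\<^sup>2 * fD B w)"
  proof -
    have h1: "is_qaut A" "is_qaut B" "\<forall>i. w i \<in> qa_alph A" "qa_alph A = qa_alph B"
      "(cmod a)\<^sup>2 + (cmod b)\<^sup>2 = 1" using h by blast+
    show ?thesis using part2_a[OF h1] part2_b[OF h1] by simp
  qed
qed

end
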